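(* Assume the setting in the context, with $\delta=0$ (so $y>0$ and $\theta>0$). Set $A_m=\lfloor z_0/\theta\rfloor$. Write $y_0=\overline{y_0}\,y+\widehat{y_0}$ and $h=\overline{h}\,y+\widehat{h}$ with $0\le \widehat{y_0},\widehat{h}<y$; when $w>0$ also write $x_0=\overline{x_0}\,w+\widehat{x_0}$ and $l=\overline{l}\,w+\widehat{l}$ with $0\le\widehat{x_0},\widehat{l}<w$. (i.1) If $w=0$, then $$d(m,T)=(1+A_m)(1+A_m+\overline{y_0})+(\overline{h}-2)\frac{A_m(1+A_m)}{2}+\sum_{k=0}^{A_m}\left\lfloor\frac{\widehat{y_0}+k\widehat{h}}{y}\right\rfloor. \quad ( * )$$ (i.2) If $w>0$, set $k_0=\left\lceil\frac{z_0w-x_0\theta}{b}\right\rceil$ (then $k_0\ge 0$). (i.2.1) If $k_0=0$, then $d(m,T)$ is given by $( * )$. (i.2.2) If $1\le k_0\le A_m$, then $$d(m,T)=(1+A_m)(1+A_m+\overline{y_0})+k_0(\overline{x_0}-A_m)+(\overline{h}-2)\frac{A_m(1+A_m)}2+\overline{l}\frac{(k_0-1)k_0}{2}+\sum_{k=0}^{A_m}\left\lfloor\frac{\widehat{y_0}+k\widehat{h}}{y}\right\rfloor+\sum_{k=0}^{k_0-1}\left\lfloor\frac{\widehat{x_0}+k\widehat{l}}{w}\right\rfloor.$$ (i.2.3) If $k_0>A_m$, then $$d(m,T)=(1+A_m)(1+\overline{x_0}+\overline{y_0})+(\overline{l}+\overline{h}-2)\frac{A_m(1+A_m)}2+\s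um_{k=0}^{A_m}\left\lfloor\frac{\widehat{x_0}+k\widehat{l}}{w}\right\rfloor+\sum_{k=0}^{A_m}\left\lfloor\frac{\widehat{y_0}+k\widehat{h}}{y}\right\rfloor.$$
   Context: Let $a<b<c$ be positive integers with $\gcd(a,b,c)=1$ and $T=\langle a,b,c\rangle=\{xa+yb+zc:x,y,z\in\mathbb N\}$. For $m\in T$, the denumerant $d(m,T)$ is the number of $(x,y,z)\in\mathbb N^3$ with $xa+yb+zc=m$. For $(i,j)\in\mathbb N^2$ let $[\![i,j]\!]=[i,i+1)\times[j,j+1)\subset\mathbb R^2$. For integers $0\le w<l$, $0\le y<h$, the L-shape $\mathrm L(l,h,w,y)$ is the set of unit squares $[\![i,j]\!]$ with $0\le i<l$, $0\le j<h$, excluding those with $i\ge l-w$ and $j\ge h-y$ (it has $lh-wy$ squares). An L-shape $\mathcal H$ is related to $T$ if it consists of exactly $c$ squares, every residue class modulo $c$ equals $ia+jb \bmod c$ for exactly one $[\![i,j]\!]\in\mathcal H$, and for each $[\![i,j]\!]\in\mathcal H$, $ia+jb=\min\{sa+tb:(s,t)\in\mathbb N^2,\ sa+tb\equiv ia+jb \pmod c\}$. Setting: $\mathcal H=\mathrm L(l,h,w,y)$ is an L-shape related to $T$, and $\delta=(la-yb)/c$, $\theta=(hb-wa)/c$; it is known that $\delta,\theta$ are nonnegative integers with $\delta+\theta>0$, $a=h\delta+y\theta$, $b=w\delta+l\theta$, $lh-wy=c$. For $m\in T$, the basic factorization of $m$ with respect to $\mathcal H$ is the unique $(x_0,y_0,z_0)\in\mathbb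 N^3$ with $x_0a+y_0b+z_0c=m$ and $[\![x_0,y_0]\!]\in\mathcal H$. Fix $m\in T$ with basic factorization $(x_0,y_0,z_0)$. *)

theory Defs
  imports Complex_Main
begin

definition in_sgp :: "nat \<Rightarrow> nat \<Rightarrow> nat \<Rightarrow> nat \<Rightarrow> bool" where
  "in_sgp a b c m \<longleftrightarrow> (\<exists>x y z. x*a + y*b + z*c = m)"

definition denumerant :: "nat \<Rightarrow> nat \<Rightarrow> nat \<Rightarrow> nat \<Rightarrow> nat" where
  "denumerant a b c m = card {(x, y, z). x*a + y*b + z*c = m}"

text \<open>L-shape L(l,h,w,y), a unit square [[i,j]] being represented by (i,j).\<close>
definition Lshape :: "nat \<Rightarrow> nat \<Rightarrow> nat \<Rightarrow> nat \<Rightarrow> (nat \<times> nat) set" where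
  "Lshape l h w y = {(i, j). i < l \<and> j < h \<and> \<not> (l - w \<le> i \<and> h - y \<le> j)}"

definition related :: "nat \<Rightarrow> nat \<Rightarrow> nat \<Rightarrow> (nat \<times> nat) set \<Rightarrow> bool" where
  "related a b c H \<longleftrightarrow>
     card H = c \<and>
     (\<forall>r < c. \<exists>!p. p \<in> H \<and> (fst p * a + snd p * b) mod c = r) \<and>
     (\<forall>(i, j) \<in> H. i*a + j*b =
        (LEAST n. \<exists>s t. n = s*a + t*b \<and> n mod c = (i*a + j*b) mod c))"

definition delta :: "nat \<Rightarrow> nat \<Rightarrow> nat \<Rightarrow> nat \<Rightarrow> nat \<Rightarrow> real" where
  "delta l y a b c = (real l * real a - real y * real b) / real c"

definition theta :: "nat \<Rightarrow> nat \<Rightarrow> nat \<Rightarrow> nat \<Rightarrow> nat \<Rightarrow> real" where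
  "theta h w a b c = (real h * real b - real w * real a) / real c"

end

theory Submission
  imports Defs
begin

lemma card_Lshape:
  assumes "w < l" "y < h"
  shows "card (Lshape l h w y) = l*h - w*y"
proof -
  have e: "Lshape l h w y = {..<l}\<times>{..<h} - {l-w..<l}\<times>{h-y..<h}"
    unfolding Lshape_def by auto
  have s: "{l-w..<l}\<times>{h-y..<h} \<subseteq> {..<l}\<times>{..<h}" by auto
  have "card ({..<l}\<times>{..<h} - {l-w..<l}\<times>{h-y..<h}) = l*h - w*y"
    using assms by (subst card_Diff_subset[OF _ s]) (auto simp: card_cartesian_product)
  then show ?thesis using e by simp
qed

lemma sum_int_reindex: "(\<Sum>k\<in>{0..int n}. f k) = (\<Sum>k\<le>n. f (int k))"
proof -
  have "{0..int n} = int ` {0..n}" by (simp add: image_int_atLeastAtMost)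
  then show ?thesis by (simp add: sum.reindex atMost_atLeast0)
qed

lemma sum_real_id: "(\<Sum>k\<le>n. real k) = real n * (real n + 1) / 2"
  by (induction n) (auto simp: field_simps)

lemma sum_real_id_less: "(\<Sum>k<n. real k) = real n * (real n - 1) / 2"
  by (induction n) (auto simp: field_simps)

lemma structure_lemma:
  assumes "0 < a" "w < l" "y < h" "b < c"
    and rel: "related a b c (Lshape l h w y)" and d0: "delta l y a b c = 0"
  shows "\<exists>t. a = y*t \<and> b = l*t \<and> c = l*h - w*y \<and> coprime l y \<and> 0<t \<and> 0<y"
proof -
  have cH: "c = l*h - w*y" using rel card_Lshape[OF assms(2,3)] unfolding related_def by simp
  have cpos: "c > 0" using assms by simp
  have "real l * real a - real y * real b = 0" using d0 cpos unfolding delta_def by simp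
  then have "real (l*a) = real (y*b)" by simp
  then have la: "l*a = y*b" by (simp only: of_nat_eq_iff)
  have lpos: "l > 0" using assms by simp
  have ypos: "y > 0"
  proof (rule ccontr)
    assume "\<not> 0 < y" then have "l*a = 0" using la by simp
    then show False using lpos assms(1) by simp
  qed
  have cop: "coprime l y"
  proof (rule ccontr)
    assume nc: "\<not> coprime l y"
    define g where "g = gcd l y"
    have g1: "g \<noteq> 1" using nc unfolding g_def by (simp add: coprime_iff_gcd_eq_1)
    have gpos: "g > 0" using lpos unfolding g_def by simp
    then have g2: "g > 1" using g1 by simp
    define l' where "l' = l div g"
    define y' where "y' = y div g"
    have ll: "l = g*l'" unfolding l'_def g_def by simp
    have yy: "y = g*y'" unfolding y'_def g_def by simp
    have l'pos: "l' > 0" using ll lpos by (cases l') auto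
    have "g*(l'*a) = g*(y'*b)" using la ll yy by (simp add: ac_simps)
    then have la': "l'*a = y'*b" using gpos by simp
    have l'l: "l' < l" using ll g2 l'pos by simp
    have y'y: "y' \<le> y" using yy gpos by simp
    have m1: "(l', 0) \<in> Lshape l h w y" using l'l assms unfolding Lshape_def by auto
    have m2: "(0, y') \<in> Lshape l h w y" using y'y assms unfolding Lshape_def by auto
    have "\<exists>!p. p \<in> Lshape l h w y \<and> (fst p * a + snd p * b) mod c = (l'*a) mod c"
      using rel cpos unfolding related_def by auto
    then have "\<And>p q. p \<in> Lshape l h w y \<and> (fst p * a + snd p * b) mod c = (l'*a) mod c \<Longrightarrow>
        q \<in> Lshape l h w y \<and> (fst q * a + snd q * b) mod c = (l'*a) mod c \<Longrightarrow> p = q"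
      by blast
    from this[of "(l',0)" "(0,y')"] have "(l',0) = (0,y')" using m1 m2 la' by simp
    then show False using l'pos by simp
  qed
  have "y dvd l*a" using la by simp
  then have "y dvd a" using cop by (metis coprime_commute coprime_dvd_mult_right_iff)
  then obtain t where at: "a = y*t" by auto
  have "y*(l*t) = y*b" using la at by (simp add: ac_simps)
  then have bt: "b = l*t" using ypos by simp
  have "t > 0" using at assms(1) by (cases t) auto
  then show ?thesis using at bt cH cop ypos by blast
qed

lemma count_lemma:
  fixes a b c l h w y t m x0 y0 z0 :: nat
  assumes at: "a = y*t" and bt: "b = l*t" and ct: "c = l*h - w*y" and wy: "w*y < l*h"
    and cop: "coprime l y" and copt: "coprime t c" and tpos: "0<t" and ypos: "0<y" and x0l: "x0 < l"
    and minz: "\<And>x v z. x*a+v*b+z*c = m \<Longrightarrow> z \<le> z0"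
    and meq: "m = x0*a + y0*b + z0*c"
  shows "denumerant a b c m = card {(k,j). k \<le> z0 div t \<and> j*y \<le> y0+k*h \<and> k*w \<le> x0+j*l}"
proof -
  define P where "P = {(k,j). k \<le> z0 div t \<and> j*y \<le> y0+k*h \<and> k*w \<le> x0+j*l}"
  define S where "S = {(x, v, z). x*a + v*b + z*c = m}"
  define g where "g = (\<lambda>(k,j). (x0 + j*l - k*w, y0 + k*h - j*y, z0 - k*t))"
  have ci: "int c = int l * int h - int w * int y" using ct wy by (simp add: of_nat_diff)
  have kt: "k*t \<le> z0" if "k \<le> z0 div t" for k
    using that tpos by (simp add: less_eq_div_iff_mult_less_eq)
  have inj: "inj_on g P"
  proof (rule inj_onI)
    fix p q assume p: "p \<in> P" and q: "q \<in> P" and e: "g p = g q"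
    obtain k1 j1 where p1: "p = (k1,j1)" by force
    obtain k2 j2 where q1: "q = (k2,j2)" by force
    have h1: "k1*t \<le> z0" "j1*y \<le> y0+k1*h" using p p1 kt unfolding P_def by auto
    have h2: "k2*t \<le> z0" "j2*y \<le> y0+k2*h" using q q1 kt unfolding P_def by auto
    have "z0 - k1*t = z0 - k2*t" using e p1 q1 unfolding g_def by simp
    then have "k1*t = k2*t" using h1 h2 by linarith
    then have k: "k1 = k2" using tpos by simp
    have "y0 + k1*h - j1*y = y0 + k2*h - j2*y" using e p1 q1 unfolding g_def by simp
    then have e2: "y0 + k2*h - j1*y = y0 + k2*h - j2*y" using k by simp
    have "j1*y \<le> y0+k2*h" using h1 k by simp
    then have "j1*y = j2*y" using h2 e2 by linarith
    then have "j1 = j2" using ypos by simp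
    then show "p = q" using k p1 q1 by simp
  qed
  have sub1: "g ` P \<subseteq> S"
  proof
    fix s assume "s \<in> g ` P"
    then obtain k j where kj: "(k,j) \<in> P" and s: "s = g (k,j)" by auto
    have h: "k*t \<le> z0" "j*y \<le> y0+k*h" "k*w \<le> x0+j*l" using kj kt unfolding P_def by auto
    have i1: "int (x0 + j*l - k*w) = int x0 + int j*int l - int k*int w" using h(3) by (simp add: of_nat_diff)
    have i2: "int (y0 + k*h - j*y) = int y0 + int k*int h - int j*int y" using h(2) by (simp add: of_nat_diff)
    have i3: "int (z0 - k*t) = int z0 - int k*int t" using h(1) by (simp add: of_nat_diff)
    have "int ((x0 + j*l - k*w)*a + (y0 + k*h - j*y)*b + (z0 - k*t)*c)
       = int (x0 + j*l - k*w)*(int y*int t) + int (y0 + k*h - j*y)*(int l*int t) + int (z0 - k*t)*int c"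
      unfolding at bt by simp
    also have "\<dots> = int x0*(int y*int t) + int y0*(int l*int t) + int z0*int c"
      unfolding i1 i2 i3 ci by (simp add: algebra_simps)
    also have "\<dots> = int m" unfolding meq at bt by simp
    finally have "int ((x0 + j*l - k*w)*a + (y0 + k*h - j*y)*b + (z0 - k*t)*c) = int m" .
    then have "(x0 + j*l - k*w)*a + (y0 + k*h - j*y)*b + (z0 - k*t)*c = m"
      by (simp only: of_nat_eq_iff)
    then show "s \<in> S" unfolding s g_def S_def by simp
  qed
  have sub2: "S \<subseteq> g ` P"
  proof
    fix s assume "s \<in> S"
    then obtain x v z where s: "s = (x,v,z)" and e: "x*a+v*b+z*c = m" unfolding S_def by auto
    have zz: "z \<le> z0" using minz e by simp
    have ei: "int x * int y * int t + int v * int l * int t + int z * int c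
        = int x0 * int y * int t + int y0 * int l * int t + int z0 * int c"
    proof -
      have "int (x*a+v*b+z*c) = int (x0*a + y0*b + z0*c)" using e meq by simp
      then show ?thesis unfolding at bt by (simp add: algebra_simps)
    qed
    have "int t dvd (int z0 - int z) * int c"
    proof -
      have "(int z0 - int z) * int c = int t * (int x * int y + int v * int l - int x0 * int y - int y0 * int l)"
        using ei by (simp add: algebra_simps)
      then show ?thesis by simp
    qed
    moreover have "coprime (int t) (int c)" using copt by simp
    ultimately have "int t dvd (int z0 - int z)" using coprime_dvd_mult_left_iff by blast
    then have "t dvd (z0 - z)" using zz by (simp add: of_nat_diff[symmetric] del: of_nat_diff)
    then obtain k where k: "z0 - z = t*k" by auto
    have zk: "z = z0 - k*t" "k*t \<le> z0" using k zz by (simp_all add: ac_simps)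
    have kA: "k \<le> z0 div t" using zk tpos by (simp add: less_eq_div_iff_mult_less_eq)
    have zi: "int z = int z0 - int k * int t" using zk by (simp add: of_nat_diff)
    have e2: "int x * int y + int v * int l = int x0 * int y + int y0 * int l + int k * int c"
    proof -
      have "int t * (int x * int y + int v * int l) = int t * (int x0 * int y + int y0 * int l + int k * int c)"
        using ei zi by (simp add: algebra_simps)
      then show ?thesis using tpos by simp
    qed
    have e3: "(int x + int k * int w - int x0) * int y = (int y0 + int k * int h - int v) * int l"
      using e2 ci by (simp add: algebra_simps)
    have "int l dvd (int x + int k * int w - int x0) * int y" using e3 by (metis dvd_triv_right)
    moreover have "coprime (int l) (int y)" using cop by simp
    ultimately have "int l dvd (int x + int k * int w - int x0)" using coprime_dvd_mult_left_iff by blast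
    then obtain J where J: "int x + int k * int w - int x0 = int l * J" by (elim dvdE)
    have lpos: "l > 0" using x0l by simp
    have Jnn: "J \<ge> 0"
    proof (rule ccontr)
      assume "\<not> J \<ge> 0"
      then have "J \<le> -1" by simp
      then have "int l * J \<le> int l * (-1)" using lpos by (intro mult_left_mono) auto
      then have "int l * J \<le> - int l" by simp
      moreover have "int k * int w \<ge> 0" by simp
      ultimately show False using J x0l by linarith
    qed
    define j where "j = nat J"
    have Jj: "J = int j" using Jnn j_def by simp
    have xe: "int x = int x0 + int j * int l - int k * int w" using J Jj by (simp add: algebra_simps)
    have "(int y0 + int k * int h - int v) * int l = int j * int y * int l" using e3 J Jj by (simp add: algebra_simps)
    then have ve: "int v = int y0 + int k * int h - int j * int y" using lpos by simp
    have "int (j*y) \<le> int (y0+k*h)" using ve of_nat_0_le_iff[of v] by simp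
    then have c1: "j*y \<le> y0+k*h" by (simp only: of_nat_le_iff)
    have "int (k*w) \<le> int (x0+j*l)" using xe of_nat_0_le_iff[of x] by simp
    then have c2: "k*w \<le> x0+j*l" by (simp only: of_nat_le_iff)
    have "int x = int (x0 + j*l - k*w)" using xe c2 by (simp add: of_nat_diff)
    then have "x = x0 + j*l - k*w" by (simp only: of_nat_eq_iff)
    moreover have "int v = int (y0 + k*h - j*y)" using ve c1 by (simp add: of_nat_diff)
    then have "v = y0 + k*h - j*y" by (simp only: of_nat_eq_iff)
    ultimately have "s = g (k,j)" using s zk unfolding g_def by simp
    moreover have "(k,j) \<in> P" using kA c1 c2 unfolding P_def by simp
    ultimately show "s \<in> g ` P" by blast
  qed
  have "card S = card P" using inj sub1 sub2 card_image[OF inj] by (metis subset_antisym)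
  then show ?thesis unfolding denumerant_def S_def P_def by simp
qed

lemma cardP_split:
  fixes y0 h y x0 l w NA :: nat
  assumes ypos: "0 < y" and lpos: "0 < l" and wy: "w*y \<le> l*h"
  shows "real (card {(k,j). k \<le> NA \<and> j*y \<le> y0+k*h \<and> k*w \<le> x0+j*l})
    = (\<Sum>k\<le>NA. real ((y0+k*h) div y) + 1)
      - real (card {(k,j). k \<le> NA \<and> x0+j*l < k*w})"
proof -
  define P1 where "P1 = {(k,j). k \<le> NA \<and> j*y \<le> y0+k*h}"
  define P2 where "P2 = {(k,j). k \<le> NA \<and> x0+j*l < k*w}"
  have P1S: "P1 = Sigma {..NA} (\<lambda>k. {..(y0+k*h) div y})"
    unfolding P1_def using ypos by (auto simp: less_eq_div_iff_mult_less_eq)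
  have fin1: "finite P1" unfolding P1S by auto
  have sub: "P2 \<subseteq> P1"
  proof
    fix p assume "p \<in> P2"
    then obtain k j where p: "p = (k,j)" "k \<le> NA" "x0+j*l < k*w" unfolding P2_def by auto
    have "j*l \<le> k*w" using p by simp
    then have "j*l*y \<le> k*w*y" by (rule mult_le_mono1)
    also have "\<dots> = k*(w*y)" by simp
    also have "\<dots> \<le> k*(l*h)" using wy by simp
    finally have "l*(j*y) \<le> l*(k*h)" by (simp add: ac_simps)
    then have "j*y \<le> k*h" using lpos by simp
    then show "p \<in> P1" using p unfolding P1_def by simp
  qed
  have eq: "{(k,j). k \<le> NA \<and> j*y \<le> y0+k*h \<and> k*w \<le> x0+j*l} = P1 - P2"
    unfolding P1_def P2_def by auto
  have "card (P1 - P2) = card P1 - card P2" using sub fin1 by (simp add: card_Diff_subset finite_subset)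
  moreover have "card P2 \<le> card P1" using sub fin1 by (simp add: card_mono)
  ultimately have "real (card (P1 - P2)) = real (card P1) - real (card P2)" by simp
  moreover have "real (card P1) = (\<Sum>k\<le>NA. real ((y0+k*h) div y) + 1)"
    unfolding P1S by (simp add: add.commute)
  ultimately show ?thesis using eq unfolding P2_def by simp
qed

lemma cardP2_zero:
  "card {(k,j). k \<le> NA \<and> x0+j*l < k*(0::nat)} = 0" by simp

lemma cardP2:
  fixes x0 l w NA K :: nat
  assumes wpos: "0 < w"
    and H1: "\<And>j. j < K \<Longrightarrow> (x0+j*l) div w \<le> NA"
    and H2: "\<And>j. K \<le> j \<Longrightarrow> NA \<le> (x0+j*l) div w"
  shows "real (card {(k,j). k \<le> NA \<and> x0+j*l < k*w}) = (\<Sum>j<K. real NA - real ((x0+j*l) div w))"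
proof -
  have e: "{(k,j). k \<le> NA \<and> x0+j*l < k*w} = (\<lambda>(j,k). (k,j)) ` (Sigma {..<K} (\<lambda>j. {(x0+j*l) div w<..NA}))"
  proof (rule set_eqI, rule iffI)
    fix p assume "p \<in> {(k,j). k \<le> NA \<and> x0+j*l < k*w}"
    then obtain k j where p: "p = (k,j)" "k \<le> NA" "x0+j*l < k*w" by auto
    have lt: "(x0+j*l) div w < k" using p wpos by (simp add: div_less_iff_less_mult)
    have "j < K" using H2[of j] lt p(2) by (metis leD le_less_trans not_le)
    then show "p \<in> (\<lambda>(j,k). (k,j)) ` (Sigma {..<K} (\<lambda>j. {(x0+j*l) div w<..NA}))"
      using p lt by (auto intro: image_eqI[where x="(j,k)"])
  next
    fix p assume "p \<in> (\<lambda>(j,k). (k,j)) ` (Sigma {..<K} (\<lambda>j. {(x0+j*l) div w<..NA}))"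
    then obtain k j where p: "p = (k,j)" "k \<le> NA" "(x0+j*l) div w < k" by auto
    then show "p \<in> {(k,j). k \<le> NA \<and> x0+j*l < k*w}" using wpos by (simp add: div_less_iff_less_mult)
  qed
  have inj: "inj_on (\<lambda>(j,k). (k::nat, j::nat)) X" for X by (auto simp: inj_on_def)
  have "card {(k,j). k \<le> NA \<and> x0+j*l < k*w} = (\<Sum>j<K. NA - (x0+j*l) div w)"
    unfolding e by (simp add: card_image[OF inj])
  then show ?thesis using H1 by (simp add: of_nat_diff)
qed

lemma div_decomp:
  fixes y y0 k h :: nat
  assumes "0 < y"
  shows "(y0 + k*h) div y = y0 div y + k*(h div y) + (y0 mod y + k*(h mod y)) div y"
proof -
  have "y0 + k*h = (y0 mod y + k*(h mod y)) + (y0 div y + k*(h div y))*y"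
  proof -
    have "y0 + k*h = (y0 div y * y + y0 mod y) + k*(h div y * y + h mod y)"
      by (simp only: div_mult_mod_eq)
    also have "\<dots> = (y0 mod y + k*(h mod y)) + (y0 div y + k*(h div y))*y"
      by (simp only: distrib_left distrib_right ac_simps)
    finally show ?thesis .
  qed
  then have "(y0 + k*h) div y = ((y0 mod y + k*(h mod y)) + (y0 div y + k*(h div y))*y) div y" by simp
  also have "\<dots> = (y0 mod y + k*(h mod y)) div y + (y0 div y + k*(h div y))"
    using assms by simp
  finally show ?thesis by simp
qed

lemma sumY_lemma:
  fixes y y0 h n :: nat
  assumes "0 < y"
  shows "(\<Sum>k\<le>n. real ((y0+k*h) div y) + 1) = (real n + 1)*(real (y0 div y) + 1)
     + real (h div y) * (real n * (real n + 1) / 2) + (\<Sum>k\<le>n. real ((y0 mod y + k*(h mod y)) div y))"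
proof -
  have "(\<Sum>k\<le>n. real ((y0+k*h) div y) + 1) = (\<Sum>k\<le>n. (real (y0 div y) + 1) + real (h div y) * real k
       + real ((y0 mod y + k*(h mod y)) div y))"
    by (intro sum.cong refl, subst div_decomp[OF assms]) (simp add: algebra_simps)
  also have "\<dots> = (real n + 1)*(real (y0 div y) + 1) + real (h div y) * (\<Sum>k\<le>n. real k)
       + (\<Sum>k\<le>n. real ((y0 mod y + k*(h mod y)) div y))"
    by (simp add: sum.distrib sum_distrib_left)
  finally show ?thesis by (simp add: sum_real_id)
qed

lemma sumX_lemma:
  fixes w x0 l n K :: nat
  assumes "0 < w"
  shows "(\<Sum>j<K. real n - real ((x0+j*l) div w)) = real K * real n - real K * real (x0 div w)
     - real (l div w) * (real K * (real K - 1) / 2) - (\<Sum>j<K. real ((x0 mod w + j*(l mod w)) div w))"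
proof -
  have "(\<Sum>j<K. real n - real ((x0+j*l) div w)) = (\<Sum>j<K. (real n - real (x0 div w)) - real (l div w) * real j
       - real ((x0 mod w + j*(l mod w)) div w))"
    by (intro sum.cong refl, subst div_decomp[OF assms]) (simp add: algebra_simps)
  also have "\<dots> = real K * (real n - real (x0 div w)) - real (l div w) * (\<Sum>j<K. real j)
       - (\<Sum>j<K. real ((x0 mod w + j*(l mod w)) div w))"
    by (simp add: sum_subtractf sum_distrib_left)
  finally show ?thesis by (simp add: sum_real_id_less algebra_simps)
qed

lemma sum_int_reindex2: "(\<Sum>k\<in>{0..int K - 1}. f k) = (\<Sum>j<K. f (int j))"
proof -
  have "{0..int K - 1} = int ` {..<K}"
  proof (cases K)
    case 0 then show ?thesis by simp
  next
    case (Suc K') 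
    then have "{0..int K - 1} = int ` {0..K'}" by (simp add: image_int_atLeastAtMost)
    then show ?thesis using Suc by (simp add: atMost_atLeast0 lessThan_Suc_atMost)
  qed
  then show ?thesis by (simp add: sum.reindex)
qed

lemma H1gen:
  fixes X w t z0 :: nat
  assumes "0 < w" "0 < t" "X*t < z0*w"
  shows "X div w \<le> z0 div t"
proof -
  have le: "X div w * w * t \<le> X * t" by (intro mult_le_mono1) simp
  have "X div w * w * t = (X div w * t) * w" by (simp only: ac_simps)
  then have "(X div w * t) * w < z0 * w" using le assms(3) by linarith
  then have "X div w * t < z0" by (rule mult_less_cancel2[THEN iffD1, THEN conjunct2])
  then show ?thesis using assms(2) by (simp add: less_eq_div_iff_mult_less_eq)
qed

lemma H2gen:
  fixes X w t z0 :: nat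
  assumes "0 < w" "0 < t" "z0*w \<le> X*t"
  shows "z0 div t \<le> X div w"
proof -
  have le: "z0 div t * t * w \<le> z0 * w" by (intro mult_le_mono1) simp
  have "z0 div t * t * w = (z0 div t * w) * t" by (simp only: ac_simps)
  then have "(z0 div t * w) * t \<le> X * t" using le assms(3) by linarith
  then have "z0 div t * w \<le> X" using assms(2) by (rule mult_le_cancel2[THEN iffD1, THEN mp])
  then show ?thesis using assms(1) by (simp add: less_eq_div_iff_mult_less_eq)
qed

lemma H2big:
  fixes x0 j l w n :: nat
  assumes "0 < w" "w < l" "n+1 \<le> j"
  shows "n \<le> (x0 + j*l) div w"
proof -
  have "n*w \<le> n*l" using assms by simp
  also have "\<dots> \<le> j*l" using assms by simp
  also have "\<dots> \<le> x0 + j*l" by simp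
  finally show ?thesis using assms(1) by (simp add: less_eq_div_iff_mult_less_eq)
qed

lemma floor_sum_conv2: "\<lfloor>(real p + real k * real q) / real r\<rfloor> = int ((p + k*q) div r)"
proof -
  have "real p + real k * real q = real (p + k*q)" by simp
  then show ?thesis by (simp only: floor_divide_of_nat_eq)
qed

lemma floor_sum_conv: "\<lfloor>(real p + real_of_int (int k) * real q) / real r\<rfloor> = int ((p + k*q) div r)"
proof -
  have "real p + real_of_int (int k) * real q = real (p + k*q)" by simp
  then show ?thesis by (simp only: floor_divide_of_nat_eq)
qed

theorem theorem5:
  fixes a b c l h w y m x0 y0 z0 :: nat
  assumes "0 < a" and "a < b" and "b < c" and "gcd a (gcd b c) = 1"
    and "w < l" and "y < h"
    and "related a b c (Lshape l h w y)"
    and "delta l y a b c = 0"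
    and "in_sgp a b c m"
    and "x0*a + y0*b + z0*c = m" and "(x0, y0) \<in> Lshape l h w y"
  shows "let \<theta> = theta h w a b c;
      A = \<lfloor>real z0 / \<theta>\<rfloor>;
      yb0 = y0 div y; yh0 = y0 mod y; hb = h div y; hh = h mod y;
      xb0 = x0 div w; xh0 = x0 mod w; lb = l div w; lh = l mod w;
      k0 = \<lceil>(real z0 * real w - real x0 * \<theta>) / real b\<rceil>;
      d = real (denumerant a b c m);
      SY = (\<Sum>k\<in>{0..A}. \<lfloor>(real yh0 + real_of_int k * real hh) / real y\<rfloor>);
      F1 = real_of_int (1 + A) * real_of_int (1 + A + int yb0)
            + (real hb - 2) * (real_of_int A * real_of_int (1 + A) / 2) + real_of_int SY
    in (w = 0 \<longrightarrow> d = F1) \<and>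
    (0 < w \<longrightarrow>
      0 \<le> k0 \<and>
      (k0 = 0 \<longrightarrow> d = F1) \<and>
      (1 \<le> k0 \<and> k0 \<le> A \<longrightarrow>
         d = real_of_int (1 + A) * real_of_int (1 + A + int yb0)
             + real_of_int k0 * (real xb0 - real_of_int A)
             + (real hb - 2) * (real_of_int A * real_of_int (1 + A) / 2)
             + real lb * (real_of_int (k0 - 1) * real_of_int k0 / 2)
             + real_of_int SY
             + real_of_int (\<Sum>k\<in>{0..k0 - 1}. \<lfloor>(real xh0 + real_of_int k * real lh) / real w\<rfloor>)) \<and>
      (A < k0 \<longrightarrow>
         d = real_of_int (1 + A) * (1 + real xb0 + real yb0)
             + (real lb + real hb - 2) * (real_of_int A * real_of_int (1 + A) / 2)
             + real_of_int (\<Sum>k\<in>{0..A}. \<lfloor>(real xh0 + real_of_int k * real lh) / real w\<rfloor>)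
             + real_of_int SY))"
proof -
  obtain t where st: "a = y*t" "b = l*t" "c = l*h - w*y" "coprime l y" "0<t" "0<y"
    using structure_lemma[OF assms(1,5,6,3,7,8)] by blast
  have cpos: "0 < c" using assms(2,3) by simp
  have wy: "w*y < l*h" using cpos st(3) by simp
  have lpos: "0 < l" using assms(5) by simp
  have x0l: "x0 < l" using assms(11) unfolding Lshape_def by simp
  have copt: "coprime t c"
  proof -
    have "t dvd a" "t dvd b" using st(1,2) by simp_all
    then have "gcd t c dvd a" "gcd t c dvd b" using dvd_trans gcd_dvd1 by blast+
    moreover have "gcd t c dvd b" using \<open>gcd t c dvd b\<close> .
    moreover have "gcd t c dvd c" by simp
    ultimately have "gcd t c dvd gcd a (gcd b c)" by simp
    then have "gcd t c = 1" using assms(4) by simp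
    then show ?thesis by (simp add: coprime_iff_gcd_eq_1)
  qed
  have minz: "z \<le> z0" if e: "x*a+v*b+z*c = m" for x v z
  proof -
    have L: "x0*a+y0*b = (LEAST n. \<exists>s t. n = s*a+t*b \<and> n mod c = (x0*a+y0*b) mod c)"
    proof -
      have "\<forall>(i, j) \<in> Lshape l h w y. i*a + j*b =
        (LEAST n. \<exists>s t. n = s*a + t*b \<and> n mod c = (i*a + j*b) mod c)"
        using assms(7) unfolding related_def by blast
      from bspec[OF this assms(11)] show ?thesis by simp
    qed
    have e2: "x*a+v*b+z*c = x0*a+y0*b+z0*c" using e assms(10) by simp
    have "(x*a+v*b) mod c = (x*a+v*b+z*c) mod c" by simp
    also have "\<dots> = (x0*a+y0*b+z0*c) mod c" using e2 by simp
    also have "\<dots> = (x0*a+y0*b) mod c" by simp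
    finally have "\<exists>s t. x*a+v*b = s*a+t*b \<and> (x*a+v*b) mod c = (x0*a+y0*b) mod c" by blast
    then have "x0*a+y0*b \<le> x*a+v*b" by (subst L) (rule Least_le)
    then have "z*c \<le> z0*c" using e2 by linarith
    then show ?thesis using cpos by simp
  qed
  define n where "n = z0 div t"
  have d1: "denumerant a b c m = card {(k,j). k \<le> n \<and> j*y \<le> y0+k*h \<and> k*w \<le> x0+j*l}"
    unfolding n_def
    by (rule count_lemma[OF st(1,2,3) wy st(4) copt st(5,6) x0l minz assms(10)[symmetric]])
  have dsplit: "real (denumerant a b c m) = (\<Sum>k\<le>n. real ((y0+k*h) div y) + 1)
      - real (card {(k,j). k \<le> n \<and> x0+j*l < k*w})"
    unfolding d1 using cardP_split[OF st(6) lpos, of w h n y0 x0] wy by simp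
  have dY: "real (denumerant a b c m) = (real n + 1)*(real (y0 div y) + 1)
     + real (h div y) * (real n * (real n + 1) / 2) + (\<Sum>k\<le>n. real ((y0 mod y + k*(h mod y)) div y))
      - real (card {(k,j). k \<le> n \<and> x0+j*l < k*w})"
    unfolding dsplit sumY_lemma[OF st(6)] by simp
  have rc: "real c = real l * real h - real w * real y" using st(3) wy by (simp add: of_nat_diff)
  have thA: "theta h w a b c = real t"
  proof -
    have "real h * real b - real w * real a = real t * real c"
      unfolding st(1,2) rc by (simp add: algebra_simps)
    then show ?thesis unfolding theta_def using cpos by simp
  qed
  have AA: "\<lfloor>real z0 / real t\<rfloor> = int n" unfolding n_def by (simp add: floor_divide_of_nat_eq)
  have SYe: "(\<Sum>k\<in>{0..int n}. \<lfloor>(real (y0 mod y) + real_of_int k * real (h mod y)) / real y\<rfloor>)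
     = (\<Sum>k\<le>n. int ((y0 mod y + k*(h mod y)) div y))"
  proof -
    have "(\<Sum>k\<in>{0..int n}. \<lfloor>(real (y0 mod y) + real_of_int k * real (h mod y)) / real y\<rfloor>)
      = (\<Sum>k\<le>n. \<lfloor>(real (y0 mod y) + real_of_int (int k) * real (h mod y)) / real y\<rfloor>)"
      by (rule sum_int_reindex)
    also have "\<dots> = (\<Sum>k\<le>n. int ((y0 mod y + k*(h mod y)) div y))"
    proof (rule sum.cong[OF refl])
      fix k
      have "real (y0 mod y) + real_of_int (int k) * real (h mod y) = real (y0 mod y + k*(h mod y))" by simp
      then show "\<lfloor>(real (y0 mod y) + real_of_int (int k) * real (h mod y)) / real y\<rfloor> = int ((y0 mod y + k*(h mod y)) div y)"
        by (simp only: floor_divide_of_nat_eq)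
    qed
    finally show ?thesis .
  qed
  define SYr where "SYr = (\<Sum>k\<le>n. real ((y0 mod y + k*(h mod y)) div y))"
  have SYr: "real_of_int (\<Sum>k\<le>n. int ((y0 mod y + k*(h mod y)) div y)) = SYr"
    unfolding SYr_def by simp
  define P2 where "P2 = real (card {(k,j). k \<le> n \<and> x0+j*l < k*w})"
  have dY2: "real (denumerant a b c m) = (real n + 1)*(real (y0 div y) + 1)
     + real (h div y) * (real n * (real n + 1) / 2) + SYr - P2"
    using dY unfolding SYr_def P2_def .
  define F1 where "F1 = (1 + real n) * (1 + real n + real (y0 div y))
            + (real (h div y) - 2) * (real n * (1 + real n) / 2) + SYr"
  have F1e: "(real n + 1)*(real (y0 div y) + 1) + real (h div y) * (real n * (real n + 1) / 2) + SYr = F1"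
    unfolding F1_def by (simp add: field_simps)
  have case0: "w = 0 \<Longrightarrow> real (denumerant a b c m) = F1"
    using dY2 F1e unfolding P2_def by simp
  define k0 where "k0 = \<lceil>(real z0 * real w - real x0 * real t) / real b\<rceil>"
  have bpos: "real b > 0" using assms(1,2) by simp
  have rb: "real b = real l * real t" using st(2) by simp
  have K1: "int j < k0 \<longleftrightarrow> (x0+j*l)*t < z0*w" for j
  proof -
    have "int j < k0 \<longleftrightarrow> real j < (real z0 * real w - real x0 * real t) / real b"
      unfolding k0_def by (simp add: less_ceiling_iff)
    also have "\<dots> \<longleftrightarrow> real j * real b < real z0 * real w - real x0 * real t"
      using bpos by (simp add: pos_less_divide_eq)
    also have "\<dots> \<longleftrightarrow> real ((x0+j*l)*t) < real (z0*w)" unfolding rb by (simp add: algebra_simps)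
    also have "\<dots> \<longleftrightarrow> (x0+j*l)*t < z0*w" by (simp only: of_nat_less_iff)
    finally show ?thesis .
  qed
  have k0nn: "0 \<le> k0"
  proof -
    have "real x0 * real t < real l * real t" using x0l st(5) by simp
    moreover have "0 \<le> real z0 * real w" by simp
    ultimately have "- real b < real z0 * real w - real x0 * real t" unfolding rb by linarith
    then have "-1 < (real z0 * real w - real x0 * real t) / real b" using bpos by (simp add: field_simps)
    then show ?thesis unfolding k0_def by simp
  qed
  have dK: "real (denumerant a b c m) = F1 - (real K * real n - real K * real (x0 div w)
       - real (l div w) * (real K * (real K - 1)/2) - (\<Sum>j<K. real ((x0 mod w + j*(l mod w)) div w)))"
    if wp: "0<w" and h1: "\<And>j. j<K \<Longrightarrow> (x0+j*l) div w \<le> n"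
      and h2: "\<And>j. K \<le> j \<Longrightarrow> n \<le> (x0+j*l) div w" for K
  proof -
    have "P2 = (\<Sum>j<K. real n - real ((x0+j*l) div w))" unfolding P2_def by (rule cardP2[OF wp h1 h2])
    then show ?thesis using dY2 F1e sumX_lemma[OF wp, of n x0 l K] by simp
  qed
  show ?thesis
    unfolding Let_def thA AA SYe SYr k0_def[symmetric]
  proof (intro conjI impI)
    assume "w = 0"
    then show "real (denumerant a b c m) = real_of_int (1 + int n) * real_of_int (1 + int n + int (y0 div y))
      + (real (h div y) - 2) * (real_of_int (int n) * real_of_int (1 + int n) / 2) + SYr"
      using case0 unfolding F1_def by simp
  next
    show "0 \<le> k0" by (rule k0nn)
  next
    assume wpos: "0 < w" and k00: "k0 = 0"
    have "real (denumerant a b c m) = F1 - (real 0 * real n - real 0 * real (x0 div w)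
       - real (l div w) * (real 0 * (real 0 - 1)/2) - (\<Sum>j<0. real ((x0 mod w + j*(l mod w)) div w)))"
    proof (rule dK[OF wpos])
      fix j :: nat assume "0 \<le> j"
      have "\<not> int j < k0" using k00 by simp
      then have "z0*w \<le> (x0+j*l)*t" using K1 by simp
      then show "n \<le> (x0+j*l) div w" unfolding n_def using H2gen[OF wpos st(5)] by blast
    qed simp
    then show "real (denumerant a b c m) = real_of_int (1 + int n) * real_of_int (1 + int n + int (y0 div y)) +
        (real (h div y) - 2) * (real_of_int (int n) * real_of_int (1 + int n) / 2) + SYr"
      unfolding F1_def by simp
  next
    assume wpos: "0 < w" and kr: "1 \<le> k0 \<and> k0 \<le> int n"
    define K where "K = nat k0"
    have kK: "k0 = int K" unfolding K_def using k0nn by simp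
    have dd: "real (denumerant a b c m) = F1 - (real K * real n - real K * real (x0 div w)
       - real (l div w) * (real K * (real K - 1)/2) - (\<Sum>j<K. real ((x0 mod w + j*(l mod w)) div w)))"
    proof (rule dK[OF wpos])
      fix j :: nat assume "j < K"
      then have "int j < k0" using kK by simp
      then have "(x0+j*l)*t < z0*w" using K1 by simp
      then show "(x0+j*l) div w \<le> n" unfolding n_def using H1gen[OF wpos st(5)] by blast
    next
      fix j :: nat assume "K \<le> j"
      then have "\<not> int j < k0" using kK by simp
      then have "z0*w \<le> (x0+j*l)*t" using K1 by simp
      then show "n \<le> (x0+j*l) div w" unfolding n_def using H2gen[OF wpos st(5)] by blast
    qed
    have SX: "real_of_int (\<Sum>k\<in>{0..k0 - 1}. \<lfloor>(real (x0 mod w) + real_of_int k * real (l mod w)) / real w\<rfloor>)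
       = (\<Sum>j<K. real ((x0 mod w + j*(l mod w)) div w))"
    proof -
      have "(\<Sum>k\<in>{0..k0 - 1}. \<lfloor>(real (x0 mod w) + real_of_int k * real (l mod w)) / real w\<rfloor>)
         = (\<Sum>j<K. \<lfloor>(real (x0 mod w) + real_of_int (int j) * real (l mod w)) / real w\<rfloor>)"
        unfolding kK by (rule sum_int_reindex2)
      then show ?thesis by (simp only: floor_sum_conv floor_sum_conv2 of_int_sum of_int_of_nat_eq)
    qed
    show "real (denumerant a b c m) =
        real_of_int (1 + int n) * real_of_int (1 + int n + int (y0 div y)) +
        real_of_int k0 * (real (x0 div w) - real_of_int (int n)) +
        (real (h div y) - 2) * (real_of_int (int n) * real_of_int (1 + int n) / 2) +
        real (l div w) * (real_of_int (k0 - 1) * real_of_int k0 / 2) +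
        SYr +
        real_of_int (\<Sum>k\<in>{0..k0 - 1}. \<lfloor>(real (x0 mod w) + real_of_int k * real (l mod w)) / real w\<rfloor>)"
      unfolding SX unfolding dd F1_def kK by (simp add: field_simps)
  next
    assume wpos: "0 < w" and kr: "int n < k0"
    have dd: "real (denumerant a b c m) = F1 - (real (n+1) * real n - real (n+1) * real (x0 div w)
       - real (l div w) * (real (n+1) * (real (n+1) - 1)/2) - (\<Sum>j<n+1. real ((x0 mod w + j*(l mod w)) div w)))"
    proof (rule dK[OF wpos])
      fix j :: nat assume "j < n+1"
      then have "int j < k0" using kr by simp
      then have "(x0+j*l)*t < z0*w" using K1 by simp
      then show "(x0+j*l) div w \<le> n" unfolding n_def using H1gen[OF wpos st(5)] by blast
    next
      fix j :: nat assume "n+1 \<le> j"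
      then show "n \<le> (x0+j*l) div w" using H2big[OF wpos assms(5)] by blast
    qed
    have SX: "real_of_int (\<Sum>k\<in>{0..int n}. \<lfloor>(real (x0 mod w) + real_of_int k * real (l mod w)) / real w\<rfloor>)
       = (\<Sum>j<n+1. real ((x0 mod w + j*(l mod w)) div w))"
    proof -
      have "(\<Sum>k\<in>{0..int n}. \<lfloor>(real (x0 mod w) + real_of_int k * real (l mod w)) / real w\<rfloor>)
         = (\<Sum>j\<le>n. \<lfloor>(real (x0 mod w) + real_of_int (int j) * real (l mod w)) / real w\<rfloor>)"
        by (rule sum_int_reindex)
      then show ?thesis by (simp only: floor_sum_conv floor_sum_conv2 of_int_sum of_int_of_nat_eq lessThan_Suc_atMost Suc_eq_plus1[symmetric])
    qed
    show "real (denumerant a b c m) =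
        real_of_int (1 + int n) * (1 + real (x0 div w) + real (y0 div y)) +
        (real (l div w) + real (h div y) - 2) * (real_of_int (int n) * real_of_int (1 + int n) / 2) +
        real_of_int (\<Sum>k\<in>{0..int n}. \<lfloor>(real (x0 mod w) + real_of_int k * real (l mod w)) / real w\<rfloor>) +
        SYr"
      unfolding SX dd F1_def by (simp add: field_simps)
  qed
qed

end
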